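(* Let $\beta\in(0,1)$, $\mu\ge0$, $\eta>0$, $\zeta=\frac{\beta}{1+\eta\mu}$. In the general conversion scheme below with online learner $\Delta_1=\mathbf{0}$, $\Delta_{t+1}=\zeta(\Delta_t-\eta\mathbf{g}_t)$, and with the choice $\mathbf{x}_t=\mathbf{x}_{t-1}+\frac1\zeta\Delta_t$, define $\mathbf{z}_t:=\mathbf{x}_t+\frac{1}{1-\zeta}\Delta_t$. Then for every $t$, $$\mathbf{z}_{t+1}-\mathbf{z}_t=-\frac{\eta}{1-\zeta}\mathbf{g}_t.$$
   Context: General conversion scheme: input $\mathbf{x}_0=\mathbf{w}_0\in\mathbb{R}^d$, $T$, $\mu\ge0$, online learner $\mathcal{A}$. For $t=1,\dots,T$: receive $\Delta_t$ from $\mathcal{A}$; choose $\mathbf{x}_t$; $\mathbf{w}_t=\mathbf{x}_t+\Delta_t$; $\mathbf{y}_t=\mathbf{x}_t+s_t\Delta_t$ with $s_t\sim\mathrm{Unif}[0,1]$ i.i.d.; $\mathbf{g}_t$ is a stochastic gradient of the objective at $\mathbf{y}_t$; send the loss $\ell_t(\mathbf{v})=\langle\mathbf{g}_t,\mathbf{v}\rangle+\frac\mu2\|\mathbf{v}\|^2$ to $\mathcal{A}$. *)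

theory Defs
  imports "HOL-Analysis.Analysis"
begin

end

theory Submission
  imports Defs
begin

theorem proposition2:
  fixes \<beta> \<mu> \<eta> \<zeta> :: real
    and x \<Delta> g z :: "nat \<Rightarrow> real ^ 'd"
  assumes "0 < \<beta>" and "\<beta> < 1" and "0 \<le> \<mu>" and "0 < \<eta>"
    and "\<zeta> = \<beta> / (1 + \<eta> * \<mu>)"
    and "\<Delta> 1 = 0"
    and "\<And>t. 1 \<le> t \<Longrightarrow> \<Delta> (t + 1) = \<zeta> *\<^sub>R (\<Delta> t - \<eta> *\<^sub>R g t)"
    and "\<And>t. 1 \<le> t \<Longrightarrow> x t = x (t - 1) + (1 / \<zeta>) *\<^sub>R \<Delta> t"
    and "\<And>t. z t = x t + (1 / (1 - \<zeta>)) *\<^sub>R \<Delta> t"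
    and "1 \<le> t"
  shows "z (t + 1) - z t = - ((\<eta> / (1 - \<zeta>)) *\<^sub>R g t)"
proof -
  have p: "1 \<le> 1 + \<eta> * \<mu>" using assms(3,4) by simp
  have z0: "0 < \<zeta>" using assms(1,5) p by simp
  have z1: "\<zeta> < 1" using assms(2,5) p
    by (simp add: divide_less_eq)
  have d: "\<Delta> (t+1) = \<zeta> *\<^sub>R (\<Delta> t - \<eta> *\<^sub>R g t)" using assms(7,10) by blast
  have xx: "x (t+1) = x t + (1/\<zeta>) *\<^sub>R \<Delta> (t+1)" using assms(8)[of "t+1"] by simp
  have n: "1 - \<zeta> \<noteq> 0" using z1 by simp
  have key: "(1/\<zeta>) * (\<zeta> * (a - \<eta> * b)) + (1/(1-\<zeta>)) * (\<zeta> * (a - \<eta> * b)) - (1/(1-\<zeta>)) * a = - ((\<eta>/(1-\<zeta>)) * b)" for a b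
  proof -
    have "(1/(1-\<zeta>)) * (\<zeta> * (a - \<eta> * b)) - (1/(1-\<zeta>)) * a = (\<zeta> * (a - \<eta> * b) - a)/(1-\<zeta>)"
      by (simp add: diff_divide_distrib)
    also have "\<zeta> * (a - \<eta> * b) - a = - ((1-\<zeta>)*a) - \<zeta>*\<eta>*b" by (simp add: algebra_simps)
    also have "(- ((1-\<zeta>)*a) - \<zeta>*\<eta>*b)/(1-\<zeta>) = - a - \<zeta>*\<eta>*b/(1-\<zeta>)"
      using n by (simp add: diff_divide_distrib)
    finally have e: "(1/(1-\<zeta>)) * (\<zeta> * (a - \<eta> * b)) - (1/(1-\<zeta>)) * a = - a - \<zeta>*\<eta>*b/(1-\<zeta>)" .
    have "(1/\<zeta>) * (\<zeta> * (a - \<eta> * b)) = a - \<eta>*b" using z0 by simp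
    moreover have "a - \<eta>*b + (- a - \<zeta>*\<eta>*b/(1-\<zeta>)) = - ((\<eta>/(1-\<zeta>)) * b)"
      using n by (simp add: field_simps)
    ultimately show ?thesis using e by simp
  qed
  show ?thesis unfolding assms(9) xx d
  proof (subst vec_eq_iff, rule allI)
    fix i
    have "(x t + (1 / \<zeta>) *\<^sub>R (\<zeta> *\<^sub>R (\<Delta> t - \<eta> *\<^sub>R g t)) + (1 / (1 - \<zeta>)) *\<^sub>R (\<zeta> *\<^sub>R (\<Delta> t - \<eta> *\<^sub>R g t))
      - (x t + (1 / (1 - \<zeta>)) *\<^sub>R \<Delta> t)) $ i
      = (1/\<zeta>) * (\<zeta> * (\<Delta> t $ i - \<eta> * g t $ i)) + (1/(1-\<zeta>)) * (\<zeta> * (\<Delta> t $ i - \<eta> * g t $ i)) - (1/(1-\<zeta>)) * \<Delta> t $ i"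
      by (simp only: vector_add_component vector_minus_component vector_scaleR_component) simp
    also have "\<dots> = - ((\<eta>/(1-\<zeta>)) * g t $ i)" by (rule key)
    finally show "(x t + (1 / \<zeta>) *\<^sub>R (\<zeta> *\<^sub>R (\<Delta> t - \<eta> *\<^sub>R g t)) + (1 / (1 - \<zeta>)) *\<^sub>R (\<zeta> *\<^sub>R (\<Delta> t - \<eta> *\<^sub>R g t))
      - (x t + (1 / (1 - \<zeta>)) *\<^sub>R \<Delta> t)) $ i = (- ((\<eta> / (1 - \<zeta>)) *\<^sub>R g t)) $ i" by simp
  qed
qed

end
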